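(* Let $\mathcal T$ be a BDD theory over a binary signature containing a rule $Q(\bar x,y)\Rightarrow\exists z\,F(y,z)$ with $F$ not occurring elsewhere in $\mathcal T$, such that (a) the head of each existential TGD of $\mathcal T$ has the form $\exists z\,R(y,z)$ and (b) no predicate occurring in the head of an existential TGD (a TGP) occurs in the head of a datalog rule. Let $D$ be a database instance without atoms of $F$, and let $\mathcal S$ be the substructure of $Chase(D,\mathcal T)$ consisting of all elements of $Chase(D,\mathcal T)$, all atoms of $D$ and all atoms of TGPs. Then every atom of $Chase(\mathcal S,\mathcal T)$ is an atom of $Chase(D,\mathcal T)$; in particular the domains of $Chase(\mathcal S,\mathcal T)$, $Chase(D,\mathcal T)$ and $\mathcal S$ coincide.
   Context: A theory is a finite set of existential TGDs $\forall\bar x(\Phi(\bar x)\Rightarrow\exists y\,Q(y,\bar y))$ ($\bar y\subseteq\bar x$) and datalog rules $\forall\bar x(\Phi(\bar x)\Rightarrow Q(\bar y))$. BDD: for each conjunctive query $\Phi$ there is a finite union of conjunctive queries $\Phi'$ with $\mathcal T,D\models\Phi$ iff $D\models\Phi'$ for all database instances $D$. $Chase(I,\mathcal T)$ (for any set of atoms $I$) is the non-oblivious chase: iterate, simultaneously adding heads of datalog rules for all body matches, and for every match of a TGD body whose head has no witness yet, adding a fresh element and the head atom with it as witness; $Chase$ is the union of all stages. *)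

theory Defs
  imports Main
begin

(* Atoms: a predicate symbol applied to a list of arguments. Instances/structures are
   sets of ground atoms; their domain is the active domain. *)
type_synonym ('p,'a) atom = "'p \<times> 'a list"

datatype ('p,'v) rule =
    Datalog "('p,'v) atom list" "('p,'v) atom"
  | TGD "('p,'v) atom list" 'v "('p,'v) atom"

fun body :: "('p,'v) rule \<Rightarrow> ('p,'v) atom list" where
  "body (Datalog B H) = B" | "body (TGD B z H) = B"

fun head :: "('p,'v) rule \<Rightarrow> ('p,'v) atom" where
  "head (Datalog B H) = H" | "head (TGD B z H) = H"

definition atom_vars :: "('p,'v) atom list \<Rightarrow> 'v set" where
  "atom_vars B = (\<Union>at\<in>set B. set (snd at))"

definition bvars :: "('p,'v) rule \<Rightarrow> 'v set" where
  "bvars r = atom_vars (body r)"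

definition preds_rule :: "('p,'v) rule \<Rightarrow> 'p set" where
  "preds_rule r = fst ` set (body r) \<union> {fst (head r)}"

fun wf_rule :: "('p,'v) rule \<Rightarrow> bool" where
  "wf_rule (Datalog B H) = (set (snd H) \<subseteq> atom_vars B)"
| "wf_rule (TGD B z H) = (z \<notin> atom_vars B \<and> z \<in> set (snd H) \<and> set (snd H) \<subseteq> atom_vars B \<union> {z})"

definition binary_sig :: "('p \<Rightarrow> nat) \<Rightarrow> bool" where
  "binary_sig ar \<longleftrightarrow> (\<forall>p. ar p \<le> 2)"

definition over_sig :: "('p \<Rightarrow> nat) \<Rightarrow> ('p,'a) atom set \<Rightarrow> bool" where
  "over_sig ar A \<longleftrightarrow> (\<forall>at\<in>A. length (snd at) = ar (fst at))"

definition rule_over_sig :: "('p \<Rightarrow> nat) \<Rightarrow> ('p,'v) rule \<Rightarrow> bool" where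
  "rule_over_sig ar r \<longleftrightarrow> over_sig ar (set (body r)) \<and> over_sig ar {head r}"

definition theory_over :: "('p \<Rightarrow> nat) \<Rightarrow> ('p,'v) rule set \<Rightarrow> bool" where
  "theory_over ar T \<longleftrightarrow> finite T \<and> (\<forall>r\<in>T. wf_rule r \<and> rule_over_sig ar r)"

definition inst :: "('v \<Rightarrow> 'a) \<Rightarrow> ('p,'v) atom \<Rightarrow> ('p,'a) atom" where
  "inst h at = (fst at, map h (snd at))"

definition matches :: "('v \<Rightarrow> 'a) \<Rightarrow> ('p,'v) atom list \<Rightarrow> ('p,'a) atom set \<Rightarrow> bool" where
  "matches h B I \<longleftrightarrow> (\<forall>at\<in>set B. inst h at \<in> I)"

definition adom :: "('p,'a) atom set \<Rightarrow> 'a set" where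
  "adom I = (\<Union>at\<in>I. set (snd at))"

definition TGPs :: "('p,'v) rule set \<Rightarrow> 'p set" where
  "TGPs T = {p. \<exists>B z args. TGD B z (p, args) \<in> T}"

fun active :: "('p,'a) atom set \<Rightarrow> ('p,'v) rule \<Rightarrow> ('v \<Rightarrow> 'a) \<Rightarrow> bool" where
  "active I (Datalog B H) h = False"
| "active I (TGD B z H) h = (matches h B I \<and> \<not> (\<exists>a. inst (h(z := a)) H \<in> I))"

(* One stage of the non-oblivious chase: simultaneously add all datalog heads for all body
   matches, and for every active TGD trigger a fresh element (distinct triggers, i.e. distinct
   body matches, get distinct fresh elements, none of which is already in the domain) together
   with the head atom witnessed by it. *)
definition chase_step :: "('p,'v) rule set \<Rightarrow> ('p,'a) atom set \<Rightarrow> ('p,'a) atom set \<Rightarrow> bool" where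
  "chase_step T I J \<longleftrightarrow> (\<exists>fr :: ('p,'v) rule \<Rightarrow> ('v \<Rightarrow> 'a) \<Rightarrow> 'a.
     (\<forall>r h. r \<in> T \<and> active I r h \<longrightarrow> fr r h \<notin> adom I) \<and>
     (\<forall>r h r' h'. r \<in> T \<and> active I r h \<and> r' \<in> T \<and> active I r' h' \<longrightarrow>
         (fr r h = fr r' h' \<longleftrightarrow> r = r' \<and> (\<forall>v\<in>bvars r. h v = h' v))) \<and>
     J = I \<union> {inst h H | B H h. Datalog B H \<in> T \<and> matches h B I}
           \<union> {inst (h(z := fr (TGD B z H) h)) H | B z H h. TGD B z H \<in> T \<and> active I (TGD B z H) h})"

definition is_chase :: "('p,'v) rule set \<Rightarrow> ('p,'a) atom set \<Rightarrow> ('p,'a) atom set \<Rightarrow> bool" where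
  "is_chase T I C \<longleftrightarrow> (\<exists>s :: nat \<Rightarrow> ('p,'a) atom set.
     s 0 = I \<and> (\<forall>n. chase_step T (s n) (s (Suc n))) \<and> C = (\<Union>n. s n))"

fun satisfies_rule :: "('p,'a) atom set \<Rightarrow> ('p,'v) rule \<Rightarrow> bool" where
  "satisfies_rule M (Datalog B H) = (\<forall>h. matches h B M \<longrightarrow> inst h H \<in> M)"
| "satisfies_rule M (TGD B z H) = (\<forall>h. matches h B M \<longrightarrow> (\<exists>a. inst (h(z := a)) H \<in> M))"

definition is_model :: "('p,'v) rule set \<Rightarrow> ('p,'a) atom set \<Rightarrow> bool" where
  "is_model T M \<longleftrightarrow> (\<forall>r\<in>T. satisfies_rule M r)"

type_synonym 'p cq = "('p, nat) atom list"

definition sat_cq :: "('p,'a) atom set \<Rightarrow> 'p cq \<Rightarrow> bool" where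
  "sat_cq M q \<longleftrightarrow> (\<exists>h :: nat \<Rightarrow> 'a. matches h q M)"

definition sat_ucq :: "('p,'a) atom set \<Rightarrow> 'p cq list \<Rightarrow> bool" where
  "sat_ucq M Q \<longleftrightarrow> (\<exists>q\<in>set Q. sat_cq M q)"

(* T, D |= q : every model (over the countable domain nat) containing D satisfies q *)
definition entails :: "('p,'v) rule set \<Rightarrow> ('p,nat) atom set \<Rightarrow> 'p cq \<Rightarrow> bool" where
  "entails T D q \<longleftrightarrow> (\<forall>M :: ('p,nat) atom set. D \<subseteq> M \<and> is_model T M \<longrightarrow> sat_cq M q)"

definition BDD :: "('p \<Rightarrow> nat) \<Rightarrow> ('p,'v) rule set \<Rightarrow> bool" where
  "BDD ar T \<longleftrightarrow> (\<forall>q :: 'p cq. over_sig ar (set q) \<longrightarrow>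
     (\<exists>Q :: 'p cq list. \<forall>D :: ('p,nat) atom set. finite D \<and> over_sig ar D \<longrightarrow>
        (entails T D q \<longleftrightarrow> sat_ucq D Q)))"

end

theory Submission
  imports Defs
begin

lemma step_mono: "chase_step T I J \<Longrightarrow> I \<subseteq> J"
  unfolding chase_step_def by blast

lemma step_cases:
  assumes "chase_step T I J" "at \<in> J"
  shows "at \<in> I \<or> (\<exists>B H h. Datalog B H \<in> T \<and> matches h B I \<and> at = inst h H)
        \<or> (\<exists>B z H h. TGD B z H \<in> T \<and> active I (TGD B z H) h \<and> (\<exists>c. at = inst (h(z := c)) H))"
  using assms unfolding chase_step_def by blast

lemma chase_mono:
  assumes "\<forall>n. chase_step T (s n) (s (Suc n))"
  shows "m \<le> n \<Longrightarrow> s m \<subseteq> s n"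
proof (induction n)
  case 0 then show ?case by simp
next
  case (Suc n)
  then show ?case using step_mono[OF assms[rule_format, of n]]
    by (metis le_SucE order_refl subset_trans)
qed

lemma matches_mono: "matches h B I \<Longrightarrow> I \<subseteq> J \<Longrightarrow> matches h B J"
  unfolding matches_def by blast

lemma finite_match:
  assumes "\<forall>n. chase_step T (s n) (s (Suc n))" "matches h B (\<Union>n. s n)"
  shows "\<exists>n. matches h B (s n)"
  using assms(2)
proof (induction B)
  case Nil then show ?case by (simp add: matches_def)
next
  case (Cons at B)
  then have "matches h B (\<Union>n. s n)" "inst h at \<in> (\<Union>n. s n)" by (auto simp: matches_def)
  then obtain n m where n: "matches h B (s n)" and m: "inst h at \<in> s m" using Cons.IH by blast
  have "s n \<subseteq> s (max n m)" "s m \<subseteq> s (max n m)" using chase_mono[OF assms(1)] by auto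
  then have "matches h (at # B) (s (max n m))" using n m by (auto simp: matches_def)
  then show ?case by blast
qed

lemma chase_model_dl:
  assumes "is_chase T I C" "Datalog B H \<in> T" "matches h B C"
  shows "inst h H \<in> C"
proof -
  obtain s where s: "s 0 = I" "\<forall>n. chase_step T (s n) (s (Suc n))" "C = (\<Union>n. s n)"
    using assms(1) unfolding is_chase_def by blast
  obtain n where "matches h B (s n)" using finite_match[OF s(2)] assms(3) s(3) by blast
  then have "inst h H \<in> s (Suc n)" using s(2)[rule_format, of n] assms(2)
    unfolding chase_step_def by blast
  then show ?thesis using s(3) by blast
qed

lemma chase_model_tgd:
  assumes "is_chase T I C" "TGD B z H \<in> T" "matches h B C"
  shows "\<exists>a. inst (h(z := a)) H \<in> C"
proof -
  obtain s where s: "s 0 = I" "\<forall>n. chase_step T (s n) (s (Suc n))" "C = (\<Union>n. s n)"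
    using assms(1) unfolding is_chase_def by blast
  obtain n where n: "matches h B (s n)" using finite_match[OF s(2)] assms(3) s(3) by blast
  show ?thesis
  proof (cases "active (s n) (TGD B z H) h")
    case True
    then have "\<exists>a. inst (h(z := a)) H \<in> s (Suc n)" using s(2)[rule_format, of n] assms(2)
      unfolding chase_step_def by blast
    then show ?thesis using s(3) by blast
  next
    case False
    then show ?thesis using n s(3) by auto
  qed
qed

theorem lemma7:
  fixes ar :: "'p \<Rightarrow> nat"
    and T :: "('p,'v) rule set"
    and Q F :: 'p and xs :: "'v list" and y z :: 'v
    and D CD :: "('p,'a) atom set"
  assumes sig: "binary_sig ar"
    and thy: "theory_over ar T"
    and bdd: "BDD ar T"
    and r0: "TGD [(Q, xs @ [y])] z (F, [y, z]) \<in> T"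
    and F_only: "\<forall>r\<in>T. r \<noteq> TGD [(Q, xs @ [y])] z (F, [y, z]) \<longrightarrow> F \<notin> preds_rule r"
    and QF: "Q \<noteq> F"
    and a: "\<forall>B w H. TGD B w H \<in> T \<longrightarrow> (\<exists>R u. u \<noteq> w \<and> H = (R, [u, w]))"
    and b: "\<forall>B H. Datalog B H \<in> T \<longrightarrow> fst H \<notin> TGPs T"
    and D: "finite D" "over_sig ar D" "\<forall>at\<in>D. fst at \<noteq> F"
    and CD: "is_chase T D CD"
  shows "\<forall>CS. is_chase T {at \<in> CD. at \<in> D \<or> fst at \<in> TGPs T} CS \<longrightarrow>
           CS \<subseteq> CD \<and> adom CS = adom CD
           \<and> adom {at \<in> CD. at \<in> D \<or> fst at \<in> TGPs T} = adom CD"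
proof (intro allI impI)
  fix CS
  define S where "S = {at \<in> CD. at \<in> D \<or> fst at \<in> TGPs T}"
  assume "is_chase T {at \<in> CD. at \<in> D \<or> fst at \<in> TGPs T} CS"
  then have CS: "is_chase T S CS" unfolding S_def .
  obtain s where s: "s 0 = D" "\<forall>n. chase_step T (s n) (s (Suc n))" "CD = (\<Union>n. s n)"
    using CD unfolding is_chase_def by blast
  obtain t where t: "t 0 = S" "\<forall>n. chase_step T (t n) (t (Suc n))" "CS = (\<Union>n. t n)"
    using CS unfolding is_chase_def by blast
  have wf: "\<And>r. r \<in> T \<Longrightarrow> wf_rule r" using thy unfolding theory_over_def by blast
  have SCD: "S \<subseteq> CD" unfolding S_def by blast
  have tS: "S \<subseteq> t n" for n using chase_mono[OF t(2), of 0 n] t(1) by simp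
  have tn: "t n \<subseteq> CD" for n
  proof (induction n)
    case 0 then show ?case using t(1) SCD by simp
  next
    case (Suc n)
    show ?case
    proof
      fix at assume at: "at \<in> t (Suc n)"
      from step_cases[OF t(2)[rule_format, of n] at] show "at \<in> CD"
      proof (elim disjE exE conjE)
        assume "at \<in> t n" then show ?thesis using Suc by blast
      next
        fix B H h assume r: "Datalog B H \<in> T" and m: "matches h B (t n)" and ath: "at = inst h H"
        have "matches h B CD" using matches_mono[OF m Suc] .
        from chase_model_dl[OF CD r this] show ?thesis using ath by simp
      next
        fix B z H h c assume r: "TGD B z H \<in> T" and act: "active (t n) (TGD B z H) h"
        then have m: "matches h B (t n)" by simp
        have "matches h B CD" using matches_mono[OF m Suc] .
        then obtain a where wa: "inst (h(z := a)) H \<in> CD"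
          using chase_model_tgd[OF CD r] by blast
        have "fst H \<in> TGPs T" proof -
          have "TGD B z (fst H, snd H) \<in> T" using r by simp
          then show ?thesis unfolding TGPs_def by blast
        qed
        then have "inst (h(z := a)) H \<in> S" using wa unfolding S_def by (simp add: inst_def)
        then have "inst (h(z := a)) H \<in> t n" using tS by blast
        moreover have "\<not> (\<exists>a. inst (h(z := a)) H \<in> t n)" using act by simp
        ultimately show ?thesis by blast
      qed
    qed
  qed
  have CSCD: "CS \<subseteq> CD" using tn t(3) by blast
  have DCD: "D \<subseteq> CD" using s by blast
  have sn: "adom (s n) \<subseteq> adom S" for n
  proof (induction n)
    case 0 then show ?case using s(1) DCD unfolding S_def adom_def by blast
  next
    case (Suc n)
    show ?case
    proof
      fix e assume "e \<in> adom (s (Suc n))"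
      then obtain at where at: "at \<in> s (Suc n)" "e \<in> set (snd at)" unfolding adom_def by blast
      from step_cases[OF s(2)[rule_format, of n] at(1)] show "e \<in> adom S"
      proof (elim disjE exE conjE)
        assume "at \<in> s n" then show ?thesis using Suc at(2) unfolding adom_def by blast
      next
        fix B H h assume r: "Datalog B H \<in> T" and m: "matches h B (s n)" and ath: "at = inst h H"
        then obtain v where v: "v \<in> set (snd H)" "e = h v" using at(2) by (auto simp: inst_def)
        have "set (snd H) \<subseteq> atom_vars B" using wf[OF r] by simp
        then obtain b where b: "b \<in> set B" "v \<in> set (snd b)" using v(1) unfolding atom_vars_def by blast
        have "inst h b \<in> s n" using m b(1) unfolding matches_def by blast
        moreover have "e \<in> set (snd (inst h b))" using b(2) v(2) by (simp add: inst_def)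
        ultimately have "e \<in> adom (s n)" unfolding adom_def by blast
        then show ?thesis using Suc by blast
      next
        fix B z H h c assume r: "TGD B z H \<in> T" and ath: "at = inst (h(z := c)) H"
        have "at \<in> CD" using at(1) s(3) by blast
        moreover have "fst H \<in> TGPs T" proof -
          have "TGD B z (fst H, snd H) \<in> T" using r by simp
          then show ?thesis unfolding TGPs_def by blast
        qed
        ultimately have "at \<in> S" using ath unfolding S_def by (simp add: inst_def)
        then show ?thesis using at(2) unfolding adom_def by blast
      qed
    qed
  qed
  have A1: "adom CD \<subseteq> adom S" using sn s(3) unfolding adom_def by blast
  have A2: "adom S \<subseteq> adom CS" using t(1) t(3) unfolding adom_def by blast
  have A3: "adom CS \<subseteq> adom CD" using CSCD unfolding adom_def by blast
  have A4: "adom S \<subseteq> adom CD" using SCD unfolding adom_def by blast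
  show "CS \<subseteq> CD \<and> adom CS = adom CD \<and> adom {at \<in> CD. at \<in> D \<or> fst at \<in> TGPs T} = adom CD"
  proof (intro conjI)
    show "CS \<subseteq> CD" by (fact CSCD)
    show "adom CS = adom CD" using A1 A2 A3 by blast
    show "adom {at \<in> CD. at \<in> D \<or> fst at \<in> TGPs T} = adom CD"
      using A1 A4 unfolding S_def by blast
  qed
qed

end
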